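(* Let $G=\langle \Sigma_\tau, Q, \rightarrow, Q^0\rangle$ be a nondeterministic automaton with set of secret states $Q^S\subseteq Q$ and non-secret states $Q^{NS}=Q\setminus Q^S$. Let $\sim_o$ be an opaque observation equivalence on $G$ with respect to $Q^S$, and let $\tilde G$ be the quotient automaton of $G$ modulo $\sim_o$, with secret states $\tilde Q^S=\{[x]\mid x\in Q^S\}$. Then $det(G)$ and $det(\tilde G)$ are bisimilar, and $det_d(G)$ and $det_d(\tilde G)$ are bisimilar.
   Context: Automata: A (nondeterministic) automaton is $G=\langle \Sigma_\tau, Q,\rightarrow, Q^0\rangle$ where $\Sigma$ is a finite set of observable events, $\tau\notin\Sigma$ is a special symbol standing for every unobservable event, $\Sigma_\tau=\Sigma\cup\{\tau\}$, $Q$ is a finite state set, $\rightarrow\subseteq Q\times\Sigma_\tau\times Q$, and $Q^0\subseteq Q$ is the set of initial states. $G$ is deterministic if $|Q^0|=1$, it has no $\tau$-transitions, and $x\xrightarrow{\sigma}y_1$, $x\xrightarrow{\sigma}y_2$ imply $y_1=y_2$. For $s\in\Sigma^*$, $p\overset{s}{\Rightarrow}q$ means that there is a path from $p$ to $q$ whose label sequence, after deleting all occurrences of $\tau$, equals $s$ (for $s=\varepsilon$ this means a path consisting of zero or more $\tau$-transitions). Observer: for $B\subseteq Q$, $UR(B)=\{q\in Q\mid b\overset{\varepsilon}{\Rightarrow}q \text{ for some } b\in B\}$. The observer $det(G)=\langle\Sigma,X_{obs},\rightarrow_{obs},X^0_{obs}\rangle$ is the deterministic automaton with initial state $X^0_{obs}=UR(Q^0)$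 and transitions $X\xrightarrow{\sigma}_{obs}Y$ iff $Y=UR(\{y\mid x\xrightarrow{\sigma}y\text{ for some }x\in X\})\neq\emptyset$; $X_{obs}\subseteq 2^Q$ consists of the states reachable from $X^0_{obs}$. Secret states and desired observer: the state set is partitioned into secret states $Q^S$ and non-secret states $Q^{NS}=Q\setminus Q^S$. The desired observer $det_d(G)$ is obtained from $det(G)$ by deleting every observer state $X$ with $X\subseteq Q^S$ (together with its incident transitions) and keeping only the part reachable from the initial state. Quotient: for an equivalence relation $\sim$ on $Q$ with classes $[x]$, the quotient automaton is $\tilde G=\langle\Sigma_\tau,\{[x]\mid x\in Q\},\rightarrow_{/\sim},\{[x^0]\mid x^0\in Q^0\}\rangle$ with $[x]\xrightarrow{\sigma}_{/\sim}[y]$ iff $x'\xrightarrow{\sigma}y'$ for some $x'\in[x]$, $y'\in[y]$. Opaque observation equivalence: an equivalence relation $\sim_o\subseteq Q\times Q$ such that for all $x_1\sim_o x_2$: (i) if $x_1\overset{s}{\Rightarrow}y_1$ for some $s\in\Sigma^*$ then there is $y_2$ with $x_2\overset{s}{\Rightarrow}y_2$ and $y_1\sim_o y_2$; (ii) $x_1\in Q^S$ iff $x_2\in Q^S$. Bisimilarity: two automata $A_1,A_2$ over the same alphabet are bisimilar if there is a relation $R$ between their state sets relating every initial state of each to some initial state of the other, such that whenever $(p_1,p_2)\in R$ and $p_1\xrightarrow{\sigma}q_1$ there is $q_2$ with $p_2\xrightarrow{\sigma}q_2$ and $(q_1,q_2)\in R$, and symmetrically. *)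

theory Defs
  imports Main
begin

text \<open>Automata with states of type 'q and labels of type 'l.
  For the nondeterministic automaton G, labels are 'e option, where None is tau
  and Some a is the observable event a.\<close>

record ('q, 'l) aut =
  states :: "'q set"
  trans  :: "('q \<times> 'l \<times> 'q) set"
  init   :: "'q set"

definition wf_aut :: "'e set \<Rightarrow> ('q, 'e option) aut \<Rightarrow> bool" where
  "wf_aut \<Sigma> G \<longleftrightarrow> finite \<Sigma> \<and> finite (states G) \<and> init G \<subseteq> states G \<and>
     trans G \<subseteq> states G \<times> (insert None (Some ` \<Sigma>)) \<times> states G"

inductive weak :: "('q, 'e option) aut \<Rightarrow> 'q \<Rightarrow> 'e list \<Rightarrow> 'q \<Rightarrow> bool"
  for G where
  weak_refl: "weak G p [] p"
| weak_tau: "(p, None, r) \<in> trans G \<Longrightarrow> weak G r s q \<Longrightarrow> weak G p s q"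
| weak_obs: "(p, Some a, r) \<in> trans G \<Longrightarrow> weak G r s q \<Longrightarrow> weak G p (a # s) q"

definition UR :: "('q, 'e option) aut \<Rightarrow> 'q set \<Rightarrow> 'q set" where
  "UR G B = {q. \<exists>b\<in>B. weak G b [] q}"

definition obs_step :: "('q, 'e option) aut \<Rightarrow> 'q set \<Rightarrow> 'e \<Rightarrow> 'q set" where
  "obs_step G X \<sigma> = UR G {y. \<exists>x\<in>X. (x, Some \<sigma>, y) \<in> trans G}"

inductive_set reach :: "('q, 'l) aut \<Rightarrow> 'q set" for A where
  reach_init: "x \<in> init A \<Longrightarrow> x \<in> states A \<Longrightarrow> x \<in> reach A"
| reach_step: "x \<in> reach A \<Longrightarrow> (x, l, y) \<in> trans A \<Longrightarrow> y \<in> states A \<Longrightarrow> y \<in> reach A"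

definition trim :: "('q, 'l) aut \<Rightarrow> ('q, 'l) aut" where
  "trim A = \<lparr> states = reach A,
              trans = {(x, l, y). (x, l, y) \<in> trans A \<and> x \<in> reach A \<and> y \<in> reach A},
              init = init A \<inter> reach A \<rparr>"

definition det :: "'e set \<Rightarrow> ('q, 'e option) aut \<Rightarrow> ('q set, 'e) aut" where
  "det \<Sigma> G = trim \<lparr> states = UNIV,
      trans = {(X, \<sigma>, Y). \<sigma> \<in> \<Sigma> \<and> Y = obs_step G X \<sigma> \<and> Y \<noteq> {}},
      init = {UR G (init G)} \<rparr>"

definition delete_states :: "('q, 'l) aut \<Rightarrow> 'q set \<Rightarrow> ('q, 'l) aut" where
  "delete_states A D = \<lparr> states = states A - D,
      trans = {(x, l, y). (x, l, y) \<in> trans A \<and> x \<notin> D \<and> y \<notin> D},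
      init = init A - D \<rparr>"

definition det_d :: "'e set \<Rightarrow> ('q, 'e option) aut \<Rightarrow> 'q set \<Rightarrow> ('q set, 'e) aut" where
  "det_d \<Sigma> G QS = trim (delete_states (det \<Sigma> G) {X. X \<subseteq> QS})"

definition quotient_aut :: "('q, 'l) aut \<Rightarrow> ('q \<times> 'q) set \<Rightarrow> ('q set, 'l) aut" where
  "quotient_aut G R = \<lparr> states = states G // R,
      trans = {(R `` {x}, l, R `` {y}) | x l y. (x, l, y) \<in> trans G},
      init = {R `` {x} | x. x \<in> init G} \<rparr>"

definition opaque_obs_equiv :: "('q, 'e option) aut \<Rightarrow> 'q set \<Rightarrow> ('q \<times> 'q) set \<Rightarrow> bool" where
  "opaque_obs_equiv G QS R \<longleftrightarrow> equiv (states G) R \<and>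
     (\<forall>(x1, x2) \<in> R.
        (\<forall>s y1. weak G x1 s y1 \<longrightarrow> (\<exists>y2. weak G x2 s y2 \<and> (y1, y2) \<in> R)) \<and>
        (x1 \<in> QS \<longleftrightarrow> x2 \<in> QS))"

definition bisimilar :: "('p, 'l) aut \<Rightarrow> ('q, 'l) aut \<Rightarrow> bool" where
  "bisimilar A B \<longleftrightarrow> (\<exists>Rel. Rel \<subseteq> states A \<times> states B \<and>
     (\<forall>p \<in> init A. \<exists>q \<in> init B. (p, q) \<in> Rel) \<and>
     (\<forall>q \<in> init B. \<exists>p \<in> init A. (p, q) \<in> Rel) \<and>
     (\<forall>(p, q) \<in> Rel.
        (\<forall>l p'. (p, l, p') \<in> trans A \<longrightarrow> (\<exists>q'. (q, l, q') \<in> trans B \<and> (p', q') \<in> Rel)) \<and>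
        (\<forall>l q'. (q, l, q') \<in> trans B \<longrightarrow> (\<exists>p'. (p, l, p') \<in> trans A \<and> (p', q') \<in> Rel))))"

end

theory Submission
  imports Defs
begin

lemma weak_append: "weak G p s q \<Longrightarrow> weak G q t r \<Longrightarrow> weak G p (s@t) r"
  by (induction rule: weak.induct) (auto intro: weak.intros)

lemma weak_decomp1: "weak G x s q \<Longrightarrow> s = [\<sigma>] \<Longrightarrow>
   \<exists>x' y'. weak G x [] x' \<and> (x', Some \<sigma>, y') \<in> trans G \<and> weak G y' [] q"
proof (induction rule: weak.induct)
  case (weak_refl p) then show ?case by simp
next
  case (weak_tau p r s q)
  then obtain x' y' where "weak G r [] x'" "(x', Some \<sigma>, y') \<in> trans G" "weak G y' [] q" by blast
  then show ?case using weak_tau by (blast intro: weak.intros)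
next
  case (weak_obs p a r s q)
  then show ?case by (blast intro: weak.intros)
qed

lemma weak_eps_trans: "weak G p [] q \<Longrightarrow> weak G q [] r \<Longrightarrow> weak G p [] r"
  using weak_append[of G p "[]" q "[]" r] by simp

lemma UR_idem: "UR G (UR G X) = UR G X"
proof
  show "UR G (UR G X) \<subseteq> UR G X"
  proof
    fix x assume "x \<in> UR G (UR G X)"
    then obtain b where b: "b \<in> UR G X" "weak G b [] x" unfolding UR_def by blast
    then obtain c where c: "c \<in> X" "weak G c [] b" unfolding UR_def by blast
    have "weak G c [] x" using weak_eps_trans[OF c(2) b(2)] .
    then show "x \<in> UR G X" using c(1) unfolding UR_def by blast
  qed
  show "UR G X \<subseteq> UR G (UR G X)" unfolding UR_def by (blast intro: weak_refl)
qed

lemma reach_states: "x \<in> reach A \<Longrightarrow> x \<in> states A"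
  by (induction rule: reach.induct) auto

lemma reach_inv:
  assumes initP: "\<And>X. X \<in> init A \<Longrightarrow> P X"
    and transP: "\<And>X l Y. P X \<Longrightarrow> (X,l,Y) \<in> trans A \<Longrightarrow> P Y"
    and fw: "\<And>X l Y. P X \<Longrightarrow> (X,l,Y) \<in> trans A \<Longrightarrow> (F X, l, F Y) \<in> trans B"
    and st: "\<And>X. P X \<Longrightarrow> F X \<in> states B \<longleftrightarrow> X \<in> states A"
    and ini: "init B = F ` init A"
  shows "X \<in> reach A \<Longrightarrow> P X \<and> F X \<in> reach B"
proof (induction rule: reach.induct)
  case (reach_init x)
  then show ?case using initP st ini by (auto intro: reach.intros)
next
  case (reach_step x l y)
  then show ?case using transP fw st by (meson reach.reach_step)
qed

lemma bisim_trim: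
  assumes initP: "\<And>X. X \<in> init A \<Longrightarrow> P X"
    and transP: "\<And>X l Y. P X \<Longrightarrow> (X,l,Y) \<in> trans A \<Longrightarrow> P Y"
    and fw: "\<And>X l Y. P X \<Longrightarrow> (X,l,Y) \<in> trans A \<Longrightarrow> (F X, l, F Y) \<in> trans B"
    and bw: "\<And>X l Z. P X \<Longrightarrow> (F X,l,Z) \<in> trans B \<Longrightarrow> \<exists>Y. (X,l,Y) \<in> trans A \<and> Z = F Y"
    and st: "\<And>X. P X \<Longrightarrow> F X \<in> states B \<longleftrightarrow> X \<in> states A"
    and ini: "init B = F ` init A"
  shows "bisimilar (trim A) (trim B)"
proof -
  have RI: "\<And>X. X \<in> reach A \<Longrightarrow> P X \<and> F X \<in> reach B"
    by (rule reach_inv[OF initP transP fw st ini])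
  define Rel where "Rel = {(X, F X) | X. X \<in> reach A}"
  have s1: "Rel \<subseteq> states (trim A) \<times> states (trim B)"
    using RI unfolding Rel_def trim_def by auto
  have s2: "\<forall>p \<in> init (trim A). \<exists>q \<in> init (trim B). (p, q) \<in> Rel"
  proof
    fix p assume "p \<in> init (trim A)"
    then have p: "p \<in> init A" "p \<in> reach A" unfolding trim_def by auto
    then have "F p \<in> init B" "F p \<in> reach B" using ini RI by auto
    then show "\<exists>q \<in> init (trim B). (p, q) \<in> Rel" using p unfolding Rel_def trim_def by auto
  qed
  have s3: "\<forall>q \<in> init (trim B). \<exists>p \<in> init (trim A). (p, q) \<in> Rel"
  proof
    fix q assume "q \<in> init (trim B)"
    then obtain p where p: "p \<in> init A" "q = F p" "F p \<in> reach B" using ini unfolding trim_def by auto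
    have "F p \<in> states B" using reach_states[OF p(3)] .
    then have "p \<in> states A" using st initP p(1) by blast
    then have "p \<in> reach A" using p(1) by (auto intro: reach.intros)
    then show "\<exists>p \<in> init (trim A). (p, q) \<in> Rel" using p unfolding Rel_def trim_def by auto
  qed
  have s4: "\<forall>(p, q) \<in> Rel.
        (\<forall>l p'. (p, l, p') \<in> trans (trim A) \<longrightarrow> (\<exists>q'. (q, l, q') \<in> trans (trim B) \<and> (p', q') \<in> Rel)) \<and>
        (\<forall>l q'. (q, l, q') \<in> trans (trim B) \<longrightarrow> (\<exists>p'. (p, l, p') \<in> trans (trim A) \<and> (p', q') \<in> Rel))"
  proof (clarify, intro conjI allI impI)
    fix p q l p'
    assume pq: "(p, q) \<in> Rel" and t: "(p, l, p') \<in> trans (trim A)"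
    have pr: "p \<in> reach A" "q = F p" using pq unfolding Rel_def by auto
    have ta: "(p, l, p') \<in> trans A" "p' \<in> reach A" using t unfolding trim_def by auto
    have "(F p, l, F p') \<in> trans B" using fw ta(1) RI pr(1) by blast
    moreover have "F p \<in> reach B" "F p' \<in> reach B" using RI pr(1) ta(2) by blast+
    ultimately have "(q, l, F p') \<in> trans (trim B)" using pr unfolding trim_def by simp
    moreover have "(p', F p') \<in> Rel" using ta(2) unfolding Rel_def by blast
    ultimately show "\<exists>q'. (q, l, q') \<in> trans (trim B) \<and> (p', q') \<in> Rel" by blast
  next
    fix p q l q'
    assume pq: "(p, q) \<in> Rel" and t: "(q, l, q') \<in> trans (trim B)"
    have pr: "p \<in> reach A" "q = F p" using pq unfolding Rel_def by auto
    have Pp: "P p" using RI pr by blast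
    have tb: "(F p, l, q') \<in> trans B" "q' \<in> reach B" using t pr unfolding trim_def by auto
    obtain Y where Y: "(p, l, Y) \<in> trans A" "q' = F Y" using bw[OF Pp tb(1)] by blast
    have PY: "P Y" using transP Pp Y(1) by blast
    have "F Y \<in> states B" using reach_states[OF tb(2)] Y(2) by simp
    then have "Y \<in> states A" using st PY by blast
    then have "Y \<in> reach A" using pr Y(1) by (auto intro: reach.intros)
    then show "\<exists>p'. (p, l, p') \<in> trans (trim A) \<and> (p', q') \<in> Rel"
      using Y pr unfolding Rel_def trim_def by auto
  qed
  show ?thesis unfolding bisimilar_def
    apply (rule exI[of _ Rel])
    using s1 s2 s3 s4 by (intro conjI)
qed

context
  fixes \<Sigma> :: "'e set" and G :: "('q, 'e option) aut" and QS :: "'q set"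
    and R :: "('q \<times> 'q) set"
  assumes wf: "wf_aut \<Sigma> G"
    and oe: "opaque_obs_equiv G QS R"
begin

lemma eqv: "equiv (states G) R" using oe unfolding opaque_obs_equiv_def by blast

lemma Rsub: "R \<subseteq> states G \<times> states G" using eqv by (simp add: equiv_type)

lemma trans_states: "(x,l,y) \<in> trans G \<Longrightarrow> x \<in> states G \<and> y \<in> states G"
proof -
  assume t: "(x,l,y) \<in> trans G"
  have "trans G \<subseteq> states G \<times> (insert None (Some ` \<Sigma>)) \<times> states G"
    using wf unfolding wf_aut_def by (elim conjE)
  then have "(x,l,y) \<in> states G \<times> (insert None (Some ` \<Sigma>)) \<times> states G" using t by (rule subsetD)
  then show ?thesis by simp
qed

lemma weak_states: "weak G p s q \<Longrightarrow> p \<in> states G \<Longrightarrow> q \<in> states G"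
  by (induction rule: weak.induct) (auto dest: trans_states)

lemma trans_Q: "(C,l,C') \<in> trans (quotient_aut G R) \<longleftrightarrow>
   (\<exists>x y. C = R``{x} \<and> C' = R``{y} \<and> (x,l,y) \<in> trans G)"
  unfolding quotient_aut_def by simp

lemma weak_lift: "weak G p s q \<Longrightarrow> weak (quotient_aut G R) (R``{p}) s (R``{q})"
proof (induction rule: weak.induct)
  case (weak_refl p) then show ?case by (rule weak.weak_refl)
next
  case (weak_tau p r s q)
  have "(R``{p}, None, R``{r}) \<in> trans (quotient_aut G R)"
    unfolding trans_Q using weak_tau(1) by blast
  then show ?case using weak_tau(3) by (rule weak.weak_tau)
next
  case (weak_obs p a r s q)
  have "(R``{p}, Some a, R``{r}) \<in> trans (quotient_aut G R)"
    unfolding trans_Q using weak_obs(1) by blast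
  then show ?case using weak_obs(3) by (rule weak.weak_obs)
qed

lemma weak_lower: "weak (quotient_aut G R) C s D \<Longrightarrow> C = R``{x} \<Longrightarrow> x \<in> states G \<Longrightarrow>
   \<exists>q. weak G x s q \<and> D = R``{q}"
proof (induction arbitrary: x rule: weak.induct)
  case (weak_refl p) then show ?case by (auto intro: weak.intros)
next
  case (weak_tau p r s q)
  obtain x1 y1 where e: "p = R``{x1}" "r = R``{y1}" "(x1,None,y1) \<in> trans G"
    using weak_tau(1) by (auto simp: trans_Q)
  have x1s: "x1 \<in> states G" using e(3) trans_states by blast
  have "(x1, x) \<in> R" using e(1) weak_tau(4,5) x1s eq_equiv_class_iff[OF eqv] by blast
  moreover have "weak G x1 [] y1" using e(3) by (auto intro: weak.intros)
  ultimately obtain y2 where y2: "weak G x [] y2" "(y1,y2) \<in> R"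
    using oe unfolding opaque_obs_equiv_def by blast
  have "r = R``{y2}" using e(2) y2(2) equiv_class_eq[OF eqv] by simp
  moreover have "y2 \<in> states G" using y2(2) Rsub by blast
  ultimately obtain q' where "weak G y2 s q'" "q = R``{q'}" using weak_tau.IH by blast
  then show ?case using y2(1) weak_append[of G x "[]" y2 s q'] by auto
next
  case (weak_obs p a r s q)
  obtain x1 y1 where e: "p = R``{x1}" "r = R``{y1}" "(x1,Some a,y1) \<in> trans G"
    using weak_obs(1) by (auto simp: trans_Q)
  have x1s: "x1 \<in> states G" using e(3) trans_states by blast
  have "(x1, x) \<in> R" using e(1) weak_obs(4,5) x1s eq_equiv_class_iff[OF eqv] by blast
  moreover have "weak G x1 [a] y1" using e(3) by (auto intro: weak.intros)
  ultimately obtain y2 where y2: "weak G x [a] y2" "(y1,y2) \<in> R"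
    using oe unfolding opaque_obs_equiv_def by blast
  have "r = R``{y2}" using e(2) y2(2) equiv_class_eq[OF eqv] by simp
  moreover have "y2 \<in> states G" using y2(2) Rsub by blast
  ultimately obtain q' where "weak G y2 s q'" "q = R``{q'}" using weak_obs.IH by blast
  then show ?case using y2(1) weak_append[of G x "[a]" y2 s q'] by auto
qed

definition F :: "'q set \<Rightarrow> 'q set set" where "F X = (\<lambda>x. R``{x}) ` X"

lemma UR_Q: "B \<subseteq> states G \<Longrightarrow> UR (quotient_aut G R) (F B) = F (UR G B)"
proof
  assume B: "B \<subseteq> states G"
  show "UR (quotient_aut G R) (F B) \<subseteq> F (UR G B)"
  proof
    fix D assume "D \<in> UR (quotient_aut G R) (F B)"
    then obtain b where b: "b \<in> B" "weak (quotient_aut G R) (R``{b}) [] D"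
      unfolding UR_def F_def by auto
    then obtain q where "weak G b [] q" "D = R``{q}" using weak_lower B by blast
    then show "D \<in> F (UR G B)" using b unfolding UR_def F_def by auto
  qed
next
  show "F (UR G B) \<subseteq> UR (quotient_aut G R) (F B)"
    unfolding UR_def F_def using weak_lift by fastforce
qed

lemma obs_Q:
  assumes X: "X \<subseteq> states G" "UR G X = X"
  shows "obs_step (quotient_aut G R) (F X) \<sigma> = F (obs_step G X \<sigma>)"
proof
  show "F (obs_step G X \<sigma>) \<subseteq> obs_step (quotient_aut G R) (F X) \<sigma>"
  proof
    fix D assume "D \<in> F (obs_step G X \<sigma>)"
    then obtain x b q where h: "x \<in> X" "(x, Some \<sigma>, b) \<in> trans G" "weak G b [] q" "D = R``{q}"
      unfolding F_def obs_step_def UR_def by auto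
    have "(R``{x}, Some \<sigma>, R``{b}) \<in> trans (quotient_aut G R)" using h(2) by (auto simp: trans_Q)
    then show "D \<in> obs_step (quotient_aut G R) (F X) \<sigma>"
      using h weak_lift[OF h(3)] unfolding F_def obs_step_def UR_def by blast
  qed
next
  show "obs_step (quotient_aut G R) (F X) \<sigma> \<subseteq> F (obs_step G X \<sigma>)"
  proof
    fix D assume "D \<in> obs_step (quotient_aut G R) (F X) \<sigma>"
    then obtain x Y where h: "x \<in> X" "(R``{x}, Some \<sigma>, Y) \<in> trans (quotient_aut G R)"
       "weak (quotient_aut G R) Y [] D"
      unfolding F_def obs_step_def UR_def by auto
    then have "weak (quotient_aut G R) (R``{x}) [\<sigma>] D" by (auto intro: weak.intros)
    moreover have xs: "x \<in> states G" using X(1) h(1) by (rule subsetD)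
    ultimately obtain q where q: "weak G x [\<sigma>] q" "D = R``{q}" using weak_lower[OF _ refl xs] by blast
    obtain x' y' where d: "weak G x [] x'" "(x', Some \<sigma>, y') \<in> trans G" "weak G y' [] q"
      using weak_decomp1[OF q(1) refl] by blast
    have "x' \<in> UR G X" unfolding UR_def using h(1) d(1) by blast
    then have "x' \<in> X" using X(2) by simp
    then have "q \<in> obs_step G X \<sigma>" using d unfolding obs_step_def UR_def by blast
    then show "D \<in> F (obs_step G X \<sigma>)" using q unfolding F_def by blast
  qed
qed

lemma F_empty: "F X = {} \<longleftrightarrow> X = {}" unfolding F_def by auto

lemma UR_states: "B \<subseteq> states G \<Longrightarrow> UR G B \<subseteq> states G"
  unfolding UR_def using weak_states by blast

lemma obs_states: "obs_step G X \<sigma> \<subseteq> states G"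
  unfolding obs_step_def UR_def using weak_states trans_states by blast

lemma init_Q: "init (quotient_aut G R) = F (init G)"
  unfolding quotient_aut_def F_def by auto

lemma init_states: "init G \<subseteq> states G" using wf unfolding wf_aut_def by blast

definition A0 where "A0 = \<lparr> states = UNIV,
      trans = {(X, \<sigma>, Y). \<sigma> \<in> \<Sigma> \<and> Y = obs_step G X \<sigma> \<and> Y \<noteq> {}},
      init = {UR G (init G)} \<rparr>"
definition B0 where "B0 = \<lparr> states = UNIV,
      trans = {(X, \<sigma>, Y). \<sigma> \<in> \<Sigma> \<and> Y = obs_step (quotient_aut G R) X \<sigma> \<and> Y \<noteq> {}},
      init = {UR (quotient_aut G R) (init (quotient_aut G R))} \<rparr>"

definition P1 where "P1 X \<longleftrightarrow> X \<subseteq> states G \<and> UR G X = X"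

lemma P1_init: "X \<in> init A0 \<Longrightarrow> P1 X"
  unfolding A0_def P1_def using UR_states init_states by (auto simp: UR_idem)
lemma P1_trans: "P1 X \<Longrightarrow> (X,l,Y) \<in> trans A0 \<Longrightarrow> P1 Y"
proof -
  assume "(X,l,Y) \<in> trans A0"
  then have Y: "Y = obs_step G X l" unfolding A0_def by simp
  have "UR G (obs_step G X l) = obs_step G X l" unfolding obs_step_def by (rule UR_idem)
  then show "P1 Y" using obs_states[of X l] Y unfolding P1_def by simp
qed
lemma P1_fw: "P1 X \<Longrightarrow> (X,l,Y) \<in> trans A0 \<Longrightarrow> (F X, l, F Y) \<in> trans B0"
proof -
  assume P: "P1 X" and t: "(X,l,Y) \<in> trans A0"
  have h: "l \<in> \<Sigma>" "Y = obs_step G X l" "Y \<noteq> {}" using t unfolding A0_def by auto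
  have "F Y = obs_step (quotient_aut G R) (F X) l" using h(2) obs_Q P unfolding P1_def by blast
  moreover have "F Y \<noteq> {}" using h(3) F_empty by blast
  ultimately show ?thesis using h(1) unfolding B0_def by simp
qed
lemma P1_bw: "P1 X \<Longrightarrow> (F X,l,Z) \<in> trans B0 \<Longrightarrow> \<exists>Y. (X,l,Y) \<in> trans A0 \<and> Z = F Y"
proof -
  assume P: "P1 X" and t: "(F X,l,Z) \<in> trans B0"
  have h: "l \<in> \<Sigma>" "Z = obs_step (quotient_aut G R) (F X) l" "Z \<noteq> {}" using t unfolding B0_def by auto
  have "Z = F (obs_step G X l)" using h(2) obs_Q P unfolding P1_def by blast
  then have "obs_step G X l \<noteq> {}" using h(3) F_empty by blast
  then have "(X,l,obs_step G X l) \<in> trans A0" using h(1) unfolding A0_def by simp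
  then show ?thesis using \<open>Z = F (obs_step G X l)\<close> by blast
qed
lemma P1_st: "P1 X \<Longrightarrow> F X \<in> states B0 \<longleftrightarrow> X \<in> states A0"
  unfolding A0_def B0_def by auto
lemma P1_ini: "init B0 = F ` init A0"
proof -
  have "UR (quotient_aut G R) (init (quotient_aut G R)) = F (UR G (init G))"
    unfolding init_Q by (rule UR_Q[OF init_states])
  then show ?thesis unfolding A0_def B0_def aut.simps image_insert image_empty by (rule arg_cong[where f="\<lambda>x. {x}"])
qed

lemma part1: "bisimilar (det \<Sigma> G) (det \<Sigma> (quotient_aut G R))"
proof -
  have "det \<Sigma> G = trim A0" "det \<Sigma> (quotient_aut G R) = trim B0"
    unfolding det_def A0_def B0_def by (rule refl)+
  moreover have "bisimilar (trim A0) (trim B0)" by (rule bisim_trim[OF P1_init P1_trans P1_fw P1_bw P1_st P1_ini])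
  ultimately show ?thesis by (simp only:)
qed

lemma RI1: "X \<in> reach A0 \<Longrightarrow> P1 X \<and> F X \<in> reach B0"
  by (rule reach_inv[OF P1_init P1_trans P1_fw P1_st P1_ini])

lemma D_iff:
  assumes "X \<subseteq> states G"
  shows "F X \<subseteq> {R `` {x} | x. x \<in> QS} \<longleftrightarrow> X \<subseteq> QS"
proof
  assume h: "F X \<subseteq> {R `` {x} | x. x \<in> QS}"
  show "X \<subseteq> QS"
  proof
    fix x assume x: "x \<in> X"
    then obtain q where q: "q \<in> QS" "R``{x} = R``{q}" using h unfolding F_def by blast
    have "x \<in> R``{x}" using x assms eqv by (meson equiv_class_self subsetD)
    then have "(q, x) \<in> R" using q by auto
    then show "x \<in> QS" using q(1) oe unfolding opaque_obs_equiv_def by blast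
  qed
qed (auto simp: F_def)

abbreviation DA where "DA \<equiv> {X. X \<subseteq> QS}"
abbreviation DB where "DB \<equiv> {Y. Y \<subseteq> {R `` {x} | x. x \<in> QS}}"
definition A2 where "A2 = delete_states (trim A0) DA"
definition B2 where "B2 = delete_states (trim B0) DB"

lemma D_iff2: "X \<in> reach A0 \<Longrightarrow> F X \<in> DB \<longleftrightarrow> X \<in> DA"
proof -
  assume "X \<in> reach A0"
  then have "X \<subseteq> states G" using RI1 unfolding P1_def by blast
  then show ?thesis using D_iff[of X] by simp
qed

lemma states_A2: "states A2 = reach A0 - DA"
  by (simp add: A2_def delete_states_def trim_def)
lemma states_B2: "states B2 = reach B0 - DB"
  by (simp add: B2_def delete_states_def trim_def)

lemma P2_init: "X \<in> init A2 \<Longrightarrow> X \<in> reach A0"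
  unfolding A2_def delete_states_def trim_def by auto
lemma P2_trans: "X \<in> reach A0 \<Longrightarrow> (X,l,Y) \<in> trans A2 \<Longrightarrow> Y \<in> reach A0"
  unfolding A2_def delete_states_def trim_def by auto
lemma P2_fw: "X \<in> reach A0 \<Longrightarrow> (X,l,Y) \<in> trans A2 \<Longrightarrow> (F X, l, F Y) \<in> trans B2"
proof -
  assume X: "X \<in> reach A0" and t: "(X,l,Y) \<in> trans A2"
  have h: "(X,l,Y) \<in> trans A0" "Y \<in> reach A0" "X \<notin> DA" "Y \<notin> DA"
    using t unfolding A2_def delete_states_def trim_def by auto
  have "(F X, l, F Y) \<in> trans B0" using P1_fw h(1) RI1 X by blast
  moreover have "F X \<in> reach B0" "F Y \<in> reach B0" using RI1 X h(2) by blast+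
  moreover have "F X \<notin> DB" "F Y \<notin> DB" using D_iff2 X h by blast+
  ultimately show ?thesis unfolding B2_def delete_states_def trim_def by simp
qed
lemma P2_bw: "X \<in> reach A0 \<Longrightarrow> (F X,l,Z) \<in> trans B2 \<Longrightarrow> \<exists>Y. (X,l,Y) \<in> trans A2 \<and> Z = F Y"
proof -
  assume X: "X \<in> reach A0" and t: "(F X,l,Z) \<in> trans B2"
  have h: "(F X,l,Z) \<in> trans B0" "Z \<notin> DB" "F X \<notin> DB"
    using t unfolding B2_def delete_states_def trim_def by auto
  obtain Y where Y: "(X,l,Y) \<in> trans A0" "Z = F Y" using P1_bw h(1) RI1 X by blast
  have Yr: "Y \<in> reach A0" using X Y(1) by (rule reach_step) (simp add: A0_def)
  have "X \<notin> DA" "Y \<notin> DA" using D_iff2 X Yr h Y(2) by blast+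
  then have "(X,l,Y) \<in> trans A2" using X Yr Y(1) unfolding A2_def delete_states_def trim_def by simp
  then show ?thesis using Y(2) by blast
qed
lemma P2_st: "X \<in> reach A0 \<Longrightarrow> F X \<in> states B2 \<longleftrightarrow> X \<in> states A2"
proof -
  assume X: "X \<in> reach A0"
  then have "F X \<in> reach B0" using RI1 by blast
  then show ?thesis unfolding states_A2 states_B2 using X D_iff2[OF X] by blast
qed
lemma P2_ini: "init B2 = F ` init A2"
proof -
  define U where "U = UR G (init G)"
  have iA: "init A0 = {U}" unfolding A0_def U_def by simp
  have iB: "init B0 = {F U}" using P1_ini iA by simp
  have Ur: "U \<in> reach A0" using iA by (intro reach_init) (auto simp: A0_def)
  have FUr: "F U \<in> reach B0" using RI1 Ur by blast
  have "init A2 = {U} - DA" using iA Ur unfolding A2_def delete_states_def trim_def by auto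
  moreover have "init B2 = {F U} - DB" using iB FUr unfolding B2_def delete_states_def trim_def by auto
  ultimately show ?thesis using D_iff2[OF Ur] by auto
qed

lemma part2: "bisimilar (det_d \<Sigma> G QS) (det_d \<Sigma> (quotient_aut G R) {R `` {x} | x. x \<in> QS})"
proof -
  have "det_d \<Sigma> G QS = trim A2" "det_d \<Sigma> (quotient_aut G R) {R `` {x} | x. x \<in> QS} = trim B2"
    unfolding det_d_def det_def A2_def B2_def A0_def B0_def by (rule refl)+
  moreover have "bisimilar (trim A2) (trim B2)" by (rule bisim_trim[OF P2_init P2_trans P2_fw P2_bw P2_st P2_ini])
  ultimately show ?thesis by (simp only:)
qed

end

theorem proposition1:
  fixes \<Sigma> :: "'e set" and G :: "('q, 'e option) aut" and QS :: "'q set"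
    and R :: "('q \<times> 'q) set"
  assumes "wf_aut \<Sigma> G"
    and "QS \<subseteq> states G"
    and "opaque_obs_equiv G QS R"
  shows "bisimilar (det \<Sigma> G) (det \<Sigma> (quotient_aut G R))
    \<and> bisimilar (det_d \<Sigma> G QS)
        (det_d \<Sigma> (quotient_aut G R) {R `` {x} | x. x \<in> QS})"
  using part1[OF assms(1,3)] part2[OF assms(1,3)] by blast

end
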